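(* Let $\lambda>0$ and $\mu=\nu>0$, and equip $\Sigma^3$ with the generalised Riemannian Berger metric $g$ described in the context. For $\theta>0$ let $U^2_\theta\subset\Sigma^3$ be the torus $\{(\cosh\theta\, e^{i\alpha},\sinh\theta\, e^{i\beta}):\alpha,\beta\in\mathbb R\}$, and let $H_g$ be its mean curvature vector in $(\Sigma^3,g)$. Then for every real number $C>\frac1\mu$ there exists $\theta>0$ such that the mean curvature of $U^2_\theta$ is constant and satisfies $\|H_g\|\equiv C$.
   Context: $\Sigma^3=\{(z,w)\in\mathbb C^2: |z|^2-|w|^2=1\}$ is a Lie group with multiplication $(z_1,w_1)\cdot(z_2,w_2)=(z_1z_2+\bar w_1w_2,\ w_1z_2+\bar z_1w_2)$ and inverse $(z,w)^{-1}=(\bar z,-w)$; the same formula defines $p\cdot v$ for $v\in\mathbb C^2$. Let $\langle (z_1,w_1),(z_2,w_2)\rangle=\mathrm{Re}(\bar z_1z_2+\bar w_1w_2)$. For $\lambda,\mu,\nu>0$ the left-invariant Riemannian metric is $g_p(A,B)=\lambda^2\langle p^{-1}A,(i,0)\rangle\langle p^{-1}B,(i,0)\rangle+\mu^2\langle p^{-1}A,(0,-1)\rangle\langle p^{-1}B,(0,-1)\rangle+\nu^2\langle p^{-1}A,(0,i)\rangle\langle p^{-1}B,(0,i)\rangle+\langle p^{-1}A,(1,0)\rangle\langle p^{-1}B,(1,0)\rangle$ for $A,B\in T_p\Sigma^3$. For a surface in $(\Sigma^3,g)$ with $g$-orthonormal tangent basis $V_1,V_2$, the mean curvature vector is $H_g=\tfrac12(B(V_1,V_1)+B(V_2,V_2))$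 with $B$ the second fundamental form, and $\|H_g\|=\sqrt{g(H_g,H_g)}$. *)

theory Defs
  imports "HOL-Analysis.Analysis"
begin

definition Sigma3 :: "(complex \<times> complex) set" where
  "Sigma3 = {p. (cmod (fst p))\<^sup>2 - (cmod (snd p))\<^sup>2 = 1}"

definition smul :: "complex \<times> complex \<Rightarrow> complex \<times> complex \<Rightarrow> complex \<times> complex" where
  "smul p q = (fst p * fst q + cnj (snd p) * snd q, snd p * fst q + cnj (fst p) * snd q)"

definition sinv :: "complex \<times> complex \<Rightarrow> complex \<times> complex" where
  "sinv p = (cnj (fst p), - snd p)"

definition cip :: "complex \<times> complex \<Rightarrow> complex \<times> complex \<Rightarrow> real" where
  "cip a b = Re (cnj (fst a) * fst b + cnj (snd a) * snd b)"

text \<open>Tangent space of Sigma^3 at p: kernel of the differential of |z|^2 - |w|^2.\<close>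
definition tangent_Sigma3 :: "complex \<times> complex \<Rightarrow> (complex \<times> complex) set" where
  "tangent_Sigma3 p = {v. 2 * Re (cnj (fst p) * fst v) - 2 * Re (cnj (snd p) * snd v) = 0}"

text \<open>The left-invariant metric g (the same formula, taken for all A, B in C^2 and all p,
  gives a Riemannian metric on a neighbourhood of Sigma^3 in C^2 = R^4 extending g).\<close>
definition gmet :: "real \<Rightarrow> real \<Rightarrow> real \<Rightarrow> complex \<times> complex \<Rightarrow> complex \<times> complex \<Rightarrow> complex \<times> complex \<Rightarrow> real" where
  "gmet lam mu nu p A B =
     lam\<^sup>2 * cip (smul (sinv p) A) (\<i>, 0) * cip (smul (sinv p) B) (\<i>, 0)
   + mu\<^sup>2 * cip (smul (sinv p) A) (0, -1) * cip (smul (sinv p) B) (0, -1)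
   + nu\<^sup>2 * cip (smul (sinv p) A) (0, \<i>) * cip (smul (sinv p) B) (0, \<i>)
   + cip (smul (sinv p) A) (1, 0) * cip (smul (sinv p) B) (1, 0)"

definition dgmet :: "real \<Rightarrow> real \<Rightarrow> real \<Rightarrow> complex \<times> complex \<Rightarrow> complex \<times> complex \<Rightarrow> complex \<times> complex \<Rightarrow> complex \<times> complex \<Rightarrow> real" where
  "dgmet lam mu nu p X A B = deriv (\<lambda>t. gmet lam mu nu (p + t *\<^sub>R X) A B) 0"

definition pd1 :: "(real \<times> real \<Rightarrow> complex \<times> complex) \<Rightarrow> real \<times> real \<Rightarrow> complex \<times> complex" where
  "pd1 f u = vector_derivative (\<lambda>t. f (t, snd u)) (at (fst u))"

definition pd2 :: "(real \<times> real \<Rightarrow> complex \<times> complex) \<Rightarrow> real \<times> real \<Rightarrow> complex \<times> complex" where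
  "pd2 f u = vector_derivative (\<lambda>t. f (fst u, t)) (at (snd u))"

text \<open>Koszul/Christoffel formula: inner product g(nabla_X Y, Z) of the Levi-Civita covariant
  derivative, where Y is the surface coordinate field with ordinary derivative a along X.\<close>
definition cov_ip :: "real \<Rightarrow> real \<Rightarrow> real \<Rightarrow> complex \<times> complex \<Rightarrow> complex \<times> complex \<Rightarrow> complex \<times> complex
    \<Rightarrow> complex \<times> complex \<Rightarrow> complex \<times> complex \<Rightarrow> real" where
  "cov_ip lam mu nu p a X Y Z = gmet lam mu nu p a Z
     + (dgmet lam mu nu p X Y Z + dgmet lam mu nu p Y X Z - dgmet lam mu nu p Z X Y) / 2"

text \<open>Mean curvature vector H_g of the immersed surface f at parameter u, as a surface in
  (Sigma^3, g): the unique vector in the normal space of the surface inside T_p Sigma^3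
  whose g-inner product with every normal Z is (1/2) sum_ij g^ij g(nabla_i f_j, Z).
  This equals (1/2)(B(V1,V1)+B(V2,V2)) for any g-orthonormal tangent basis V1, V2.\<close>
definition mean_curv_vec :: "real \<Rightarrow> real \<Rightarrow> real \<Rightarrow> (real \<times> real \<Rightarrow> complex \<times> complex) \<Rightarrow> real \<times> real \<Rightarrow> complex \<times> complex" where
  "mean_curv_vec lam mu nu f u =
    (let p = f u; f1 = pd1 f u; f2 = pd2 f u;
         f11 = pd1 (pd1 f) u; f12 = pd2 (pd1 f) u; f22 = pd2 (pd2 f) u;
         g = gmet lam mu nu p;
         g11 = g f1 f1; g12 = g f1 f2; g22 = g f2 f2; d = g11 * g22 - g12\<^sup>2;
         Nsp = {Z \<in> tangent_Sigma3 p. g Z f1 = 0 \<and> g Z f2 = 0};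
         S = (\<lambda>Z. ((g22 / d) * cov_ip lam mu nu p f11 f1 f1 Z
                   - 2 * (g12 / d) * cov_ip lam mu nu p f12 f1 f2 Z
                   + (g11 / d) * cov_ip lam mu nu p f22 f2 f2 Z) / 2)
     in THE H. H \<in> Nsp \<and> (\<forall>Z\<in>Nsp. g H Z = S Z))"

definition mean_curv_norm :: "real \<Rightarrow> real \<Rightarrow> real \<Rightarrow> (real \<times> real \<Rightarrow> complex \<times> complex) \<Rightarrow> real \<times> real \<Rightarrow> real" where
  "mean_curv_norm lam mu nu f u =
     sqrt (gmet lam mu nu (f u) (mean_curv_vec lam mu nu f u) (mean_curv_vec lam mu nu f u))"

definition torusU :: "real \<Rightarrow> real \<times> real \<Rightarrow> complex \<times> complex" where
  "torusU \<theta> u = (complex_of_real (cosh \<theta>) * cis (fst u), complex_of_real (sinh \<theta>) * cis (snd u))"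

end

theory Submission
  imports Defs
begin


definition Lm where "Lm p A = smul (sinv p) A"

definition Qf :: "real \<Rightarrow> real \<Rightarrow> real \<Rightarrow> complex \<times> complex \<Rightarrow> complex \<times> complex \<Rightarrow> real" where
  "Qf lam mu nu x y = lam\<^sup>2 * cip x (\<i>, 0) * cip y (\<i>, 0)
   + mu\<^sup>2 * cip x (0, -1) * cip y (0, -1)
   + nu\<^sup>2 * cip x (0, \<i>) * cip y (0, \<i>)
   + cip x (1, 0) * cip y (1, 0)"

lemma cip_consts[simp]:
  "cip x (\<i>, 0) = Im (fst x)" "cip x (0, -1) = - Re (snd x)" "cip x (0, \<i>) = Im (snd x)" "cip x (1, 0) = Re (fst x)"
  by (simp_all add: cip_def)

lemma gmet_Qf: "gmet lam mu nu p A B = Qf lam mu nu (Lm p A) (Lm p B)"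
  by (simp add: gmet_def Qf_def Lm_def)

lemma Lm_line: "Lm (p + t *\<^sub>R X) A = Lm p A + t *\<^sub>R Lm X A"
  by (simp add: Lm_def smul_def sinv_def scaleR_conv_of_real algebra_simps)

lemma Lm_scale1: "Lm (r *\<^sub>R X) A = r *\<^sub>R Lm X A"
  by (simp add: Lm_def smul_def sinv_def scaleR_conv_of_real algebra_simps)

lemma Lm_scale2: "Lm X (r *\<^sub>R A) = r *\<^sub>R Lm X A"
  by (simp add: Lm_def smul_def sinv_def scaleR_conv_of_real algebra_simps)

lemma Lm_diff2: "Lm X (A - B) = Lm X A - Lm X B"
  by (simp add: Lm_def smul_def sinv_def algebra_simps)

lemma Qf_scale1: "Qf lam mu nu (r *\<^sub>R x) y = r * Qf lam mu nu x y"
  by (simp add: Qf_def algebra_simps)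
lemma Qf_scale2: "Qf lam mu nu x (r *\<^sub>R y) = r * Qf lam mu nu x y"
  by (simp add: Qf_def algebra_simps)
lemma Qf_diff1: "Qf lam mu nu (x - z) y = Qf lam mu nu x y - Qf lam mu nu z y"
  by (simp add: Qf_def algebra_simps)
lemma Qf_sym: "Qf lam mu nu x y = Qf lam mu nu y x"
  by (simp add: Qf_def algebra_simps)

lemma dgmet_eq: "dgmet lam mu nu p X A B =
   Qf lam mu nu (Lm X A) (Lm p B) + Qf lam mu nu (Lm p A) (Lm X B)"
proof -
  have "((\<lambda>t. gmet lam mu nu (p + t *\<^sub>R X) A B) has_real_derivative
     (Qf lam mu nu (Lm X A) (Lm p B) + Qf lam mu nu (Lm p A) (Lm X B))) (at 0)"
    unfolding gmet_Qf Lm_line Qf_def cip_consts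
    by (auto intro!: derivative_eq_intros simp: algebra_simps)
  then show ?thesis unfolding dgmet_def by (rule DERIV_imp_deriv)
qed

lemma gmet_scale2: "gmet lam mu nu p A (r *\<^sub>R B) = r * gmet lam mu nu p A B"
  by (simp add: gmet_Qf Lm_scale2 Qf_scale2)
lemma gmet_scale1: "gmet lam mu nu p (r *\<^sub>R A) B = r * gmet lam mu nu p A B"
  by (simp add: gmet_Qf Lm_scale2 Qf_scale1)
lemma gmet_diff1: "gmet lam mu nu p (A - C) B = gmet lam mu nu p A B - gmet lam mu nu p C B"
  by (simp add: gmet_Qf Lm_diff2 Qf_diff1)
lemma gmet_sym: "gmet lam mu nu p A B = gmet lam mu nu p B A"
  by (simp add: gmet_Qf Qf_sym)

lemma cov_scale: "cov_ip lam mu nu p a X Y (r *\<^sub>R Z) = r * cov_ip lam mu nu p a X Y Z"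
  by (simp add: cov_ip_def gmet_scale2 dgmet_eq Lm_scale1 Lm_scale2 Qf_scale1 Qf_scale2 algebra_simps)

lemma tangent_Lm: "Z \<in> tangent_Sigma3 p \<longleftrightarrow> Re (fst (Lm p Z)) = 0"
  by (auto simp: tangent_Sigma3_def Lm_def smul_def sinv_def)

lemma Lm_inv: assumes "(cmod (fst p))\<^sup>2 - (cmod (snd p))\<^sup>2 = 1"
  shows "smul p (Lm p Z) = Z"
proof -
  obtain p1 p2 where p: "p = (p1, p2)" by (cases p)
  obtain z1 z2 where z: "Z = (z1, z2)" by (cases Z)
  have h: "cnj p1 * p1 - cnj p2 * p2 = 1"
  proof -
    have "cnj p1 * p1 - cnj p2 * p2 = complex_of_real ((cmod p1)^2 - (cmod p2)^2)"
      by (simp only: of_real_diff complex_norm_square) (simp add: mult.commute)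
    then show ?thesis by (metis assms p fst_conv snd_conv of_real_1)
  qed
  have "p1 * (cnj p1 * z1 - cnj p2 * z2) + cnj p2 * (- (p2 * z1) + p1 * z2) = (cnj p1 * p1 - cnj p2 * p2) * z1"
    by (simp add: algebra_simps)
  moreover have "p2 * (cnj p1 * z1 - cnj p2 * z2) + cnj p1 * (- (p2 * z1) + p1 * z2) = (cnj p1 * p1 - cnj p2 * p2) * z2"
    by (simp add: algebra_simps)
  ultimately show ?thesis using h unfolding p z by (simp add: Lm_def smul_def sinv_def)
qed

lemma vd_cis: "((\<lambda>t. complex_of_real k * cis t) has_vector_derivative (complex_of_real k * (\<i> * cis t))) (at t)"
  unfolding has_vector_derivative_def
  by (auto intro!: derivative_eq_intros simp: algebra_simps)

lemma pd1_torus: "pd1 (torusU th) = (\<lambda>u. (complex_of_real (cosh th) * (\<i> * cis (fst u)), 0))"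
proof
  fix u :: "real \<times> real"
  have "((\<lambda>t. torusU th (t, snd u)) has_vector_derivative (complex_of_real (cosh th) * (\<i> * cis (fst u)), 0)) (at (fst u))"
    unfolding torusU_def by (auto intro!: derivative_intros vd_cis)
  then show "pd1 (torusU th) u = (complex_of_real (cosh th) * (\<i> * cis (fst u)), 0)"
    unfolding pd1_def by (rule vector_derivative_at)
qed

lemma pd2_torus: "pd2 (torusU th) = (\<lambda>u. (0, complex_of_real (sinh th) * (\<i> * cis (snd u))))"
proof
  fix u :: "real \<times> real"
  have "((\<lambda>t. torusU th (fst u, t)) has_vector_derivative (0, complex_of_real (sinh th) * (\<i> * cis (snd u)))) (at (snd u))"
    unfolding torusU_def by (auto intro!: derivative_intros vd_cis)
  then show "pd2 (torusU th) u = (0, complex_of_real (sinh th) * (\<i> * cis (snd u)))"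
    unfolding pd2_def by (rule vector_derivative_at)
qed

lemma vd_cis2: "((\<lambda>t. complex_of_real k * (\<i> * cis t)) has_vector_derivative (- (complex_of_real k * cis t))) (at t)"
  unfolding has_vector_derivative_def
  by (auto intro!: derivative_eq_intros simp: algebra_simps)

lemma pd11_torus: "pd1 (pd1 (torusU th)) u = (- (complex_of_real (cosh th) * cis (fst u)), 0)"
proof -
  have "((\<lambda>t. pd1 (torusU th) (t, snd u)) has_vector_derivative (- (complex_of_real (cosh th) * cis (fst u)), 0)) (at (fst u))"
    unfolding pd1_torus by (auto intro!: derivative_intros vd_cis2)
  then show ?thesis
    unfolding pd1_def[of "pd1 (torusU th)"] by (rule vector_derivative_at)
qed

lemma pd22_torus: "pd2 (pd2 (torusU th)) u = (0, - (complex_of_real (sinh th) * cis (snd u)))"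
proof -
  have "((\<lambda>t. pd2 (torusU th) (fst u, t)) has_vector_derivative (0, - (complex_of_real (sinh th) * cis (snd u)))) (at (snd u))"
    unfolding pd2_torus by (auto intro!: derivative_intros vd_cis2)
  then show ?thesis
    unfolding pd2_def[of "pd2 (torusU th)"] by (rule vector_derivative_at)
qed

lemma pd12_torus: "pd2 (pd1 (torusU th)) u = (0, 0)"
proof -
  have "((\<lambda>t. pd1 (torusU th) (fst u, t)) has_vector_derivative (0, 0)) (at (snd u))"
    unfolding pd1_torus by (auto intro!: derivative_intros)
  then show ?thesis
    unfolding pd2_def[of "pd1 (torusU th)"] by (rule vector_derivative_at)
qed



lemma Lm_zero: "Lm p (0,0) = (0,0)" by (simp add: Lm_def smul_def)

lemmas trig1 = sin_cos_squared_add3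

context
  fixes c s u v lam mu :: real
  assumes cs1: "c^2 - s^2 = 1" and cpos: "c > 0" and spos: "s > 0" and lpos: "lam > 0" and mpos: "mu > 0"
begin

abbreviation "PP \<equiv> (complex_of_real c * cis u, complex_of_real s * cis v)"
abbreviation "F1 \<equiv> (complex_of_real c * (\<i> * cis u), 0::complex)"
abbreviation "F2 \<equiv> (0::complex, complex_of_real s * (\<i> * cis v))"
abbreviation "F11 \<equiv> (- (complex_of_real c * cis u), 0::complex)"
abbreviation "F22 \<equiv> (0::complex, - (complex_of_real s * cis v))"
abbreviation "NN \<equiv> (complex_of_real s * cis u, complex_of_real c * cis v)"
abbreviation "EE \<equiv> cis (u + v)"

lemma Lp_f1: "Lm PP F1 = (\<i> * of_real (c^2), - (\<i> * of_real (c * s) * EE))"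
  by (simp add: Lm_def smul_def sinv_def complex_eq_iff cos_add sin_add power2_eq_square algebra_simps;
     (use trig1[of u] trig1[of v] in algebra)?)
lemma Lp_f2: "Lm PP F2 = (- (\<i> * of_real (s^2)), \<i> * of_real (c * s) * EE)"
  by (simp add: Lm_def smul_def sinv_def complex_eq_iff cos_add sin_add power2_eq_square algebra_simps;
     (use trig1[of u] trig1[of v] in algebra)?)
lemma Lp_n: "Lm PP NN = (0, of_real (c^2 - s^2) * EE)"
  by (simp add: Lm_def smul_def sinv_def complex_eq_iff cos_add sin_add power2_eq_square algebra_simps;
     (use trig1[of u] trig1[of v] in algebra)?)
lemma Lp_f11: "Lm PP F11 = (- of_real (c^2), of_real (c * s) * EE)"
  by (simp add: Lm_def smul_def sinv_def complex_eq_iff cos_add sin_add power2_eq_square algebra_simps;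
     (use trig1[of u] trig1[of v] in algebra)?)
lemma Lp_f22: "Lm PP F22 = (of_real (s^2), - (of_real (c * s) * EE))"
  by (simp add: Lm_def smul_def sinv_def complex_eq_iff cos_add sin_add power2_eq_square algebra_simps;
     (use trig1[of u] trig1[of v] in algebra)?)
lemma L11: "Lm F1 F1 = (of_real (c^2), 0)"
  by (simp add: Lm_def smul_def sinv_def complex_eq_iff cos_add sin_add power2_eq_square algebra_simps;
     (use trig1[of u] trig1[of v] in algebra)?)
lemma L12: "Lm F1 F2 = (0, - (of_real (c * s) * EE))"
  by (simp add: Lm_def smul_def sinv_def complex_eq_iff cos_add sin_add power2_eq_square algebra_simps;
     (use trig1[of u] trig1[of v] in algebra)?)
lemma L1n: "Lm F1 NN = (- (\<i> * of_real (c * s)), \<i> * of_real (c^2) * EE)"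
  by (simp add: Lm_def smul_def sinv_def complex_eq_iff cos_add sin_add power2_eq_square algebra_simps;
     (use trig1[of u] trig1[of v] in algebra)?)
lemma L21: "Lm F2 F1 = (0, of_real (c * s) * EE)"
  by (simp add: Lm_def smul_def sinv_def complex_eq_iff cos_add sin_add power2_eq_square algebra_simps;
     (use trig1[of u] trig1[of v] in algebra)?)
lemma L22: "Lm F2 F2 = (- of_real (s^2), 0)"
  by (simp add: Lm_def smul_def sinv_def complex_eq_iff cos_add sin_add power2_eq_square algebra_simps;
     (use trig1[of u] trig1[of v] in algebra)?)
lemma L2n: "Lm F2 NN = (\<i> * of_real (c * s), - (\<i> * of_real (s^2) * EE))"
  by (simp add: Lm_def smul_def sinv_def complex_eq_iff cos_add sin_add power2_eq_square algebra_simps;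
     (use trig1[of u] trig1[of v] in algebra)?)
lemma Ln1: "Lm NN F1 = (\<i> * of_real (c * s), - (\<i> * of_real (c^2) * EE))"
  by (simp add: Lm_def smul_def sinv_def complex_eq_iff cos_add sin_add power2_eq_square algebra_simps;
     (use trig1[of u] trig1[of v] in algebra)?)
lemma Ln2: "Lm NN F2 = (- (\<i> * of_real (c * s)), \<i> * of_real (s^2) * EE)"
  by (simp add: Lm_def smul_def sinv_def complex_eq_iff cos_add sin_add power2_eq_square algebra_simps;
     (use trig1[of u] trig1[of v] in algebra)?)


lemma g11: "gmet lam mu mu PP F1 F1 = lam^2 * c^4 + mu^2 * c^2 * s^2"
  unfolding dgmet_eq gmet_Qf Lp_f1 Lp_f2 Lp_n Lp_f11 Lp_f22 L11 L12 L1n L21 L22 L2n Ln1 Ln2 Lm_zero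
  by (simp add: Qf_def power2_eq_square algebra_simps;
     (use trig1[of "u+v"] cs1 in algebra)?)

lemma g22: "gmet lam mu mu PP F2 F2 = lam^2 * s^4 + mu^2 * c^2 * s^2"
  unfolding dgmet_eq gmet_Qf Lp_f1 Lp_f2 Lp_n Lp_f11 Lp_f22 L11 L12 L1n L21 L22 L2n Ln1 Ln2 Lm_zero
  by (simp add: Qf_def power2_eq_square algebra_simps;
     (use trig1[of "u+v"] cs1 in algebra)?)

lemma g12: "gmet lam mu mu PP F1 F2 = - ((lam^2 + mu^2) * c^2 * s^2)"
  unfolding dgmet_eq gmet_Qf Lp_f1 Lp_f2 Lp_n Lp_f11 Lp_f22 L11 L12 L1n L21 L22 L2n Ln1 Ln2 Lm_zero
  by (simp add: Qf_def power2_eq_square algebra_simps;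
     (use trig1[of "u+v"] cs1 in algebra)?)

lemma gnn: "gmet lam mu mu PP NN NN = mu^2"
  unfolding dgmet_eq gmet_Qf Lp_f1 Lp_f2 Lp_n Lp_f11 Lp_f22 L11 L12 L1n L21 L22 L2n Ln1 Ln2 Lm_zero
  by (simp add: Qf_def power2_eq_square algebra_simps;
     (use trig1[of "u+v"] cs1 in algebra)?)

lemma gn1: "gmet lam mu mu PP NN F1 = 0"
  unfolding dgmet_eq gmet_Qf Lp_f1 Lp_f2 Lp_n Lp_f11 Lp_f22 L11 L12 L1n L21 L22 L2n Ln1 Ln2 Lm_zero
  by (simp add: Qf_def power2_eq_square algebra_simps;
     (use trig1[of "u+v"] cs1 in algebra)?)

lemma gn2: "gmet lam mu mu PP NN F2 = 0"
  unfolding dgmet_eq gmet_Qf Lp_f1 Lp_f2 Lp_n Lp_f11 Lp_f22 L11 L12 L1n L21 L22 L2n Ln1 Ln2 Lm_zero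
  by (simp add: Qf_def power2_eq_square algebra_simps;
     (use trig1[of "u+v"] cs1 in algebra)?)

lemma g11n: "gmet lam mu mu PP F11 NN = mu^2 * c * s"
  unfolding dgmet_eq gmet_Qf Lp_f1 Lp_f2 Lp_n Lp_f11 Lp_f22 L11 L12 L1n L21 L22 L2n Ln1 Ln2 Lm_zero
  by (simp add: Qf_def power2_eq_square algebra_simps;
     (use trig1[of "u+v"] cs1 in algebra)?)

lemma g22n: "gmet lam mu mu PP F22 NN = - (mu^2 * c * s)"
  unfolding dgmet_eq gmet_Qf Lp_f1 Lp_f2 Lp_n Lp_f11 Lp_f22 L11 L12 L1n L21 L22 L2n Ln1 Ln2 Lm_zero
  by (simp add: Qf_def power2_eq_square algebra_simps;
     (use trig1[of "u+v"] cs1 in algebra)?)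

lemma g0n: "gmet lam mu mu PP (0,0) NN = 0"
  unfolding dgmet_eq gmet_Qf Lp_f1 Lp_f2 Lp_n Lp_f11 Lp_f22 L11 L12 L1n L21 L22 L2n Ln1 Ln2 Lm_zero
  by (simp add: Qf_def power2_eq_square algebra_simps;
     (use trig1[of "u+v"] cs1 in algebra)?)

lemma d11n: "dgmet lam mu mu PP F1 F1 NN = - ((lam^2 + mu^2) * c^3 * s)"
  unfolding dgmet_eq gmet_Qf Lp_f1 Lp_f2 Lp_n Lp_f11 Lp_f22 L11 L12 L1n L21 L22 L2n Ln1 Ln2 Lm_zero
  by (simp add: Qf_def power2_eq_square algebra_simps;
     (use trig1[of "u+v"] cs1 in algebra)?)

lemma dn11: "dgmet lam mu mu PP NN F1 F1 = 2 * (lam^2 + mu^2) * c^3 * s"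
  unfolding dgmet_eq gmet_Qf Lp_f1 Lp_f2 Lp_n Lp_f11 Lp_f22 L11 L12 L1n L21 L22 L2n Ln1 Ln2 Lm_zero
  by (simp add: Qf_def power2_eq_square algebra_simps;
     (use trig1[of "u+v"] cs1 in algebra)?)

lemma d22n: "dgmet lam mu mu PP F2 F2 NN = - ((lam^2 + mu^2) * c * s^3)"
  unfolding dgmet_eq gmet_Qf Lp_f1 Lp_f2 Lp_n Lp_f11 Lp_f22 L11 L12 L1n L21 L22 L2n Ln1 Ln2 Lm_zero
  by (simp add: Qf_def power2_eq_square algebra_simps;
     (use trig1[of "u+v"] cs1 in algebra)?)

lemma dn22: "dgmet lam mu mu PP NN F2 F2 = 2 * (lam^2 + mu^2) * c * s^3"
  unfolding dgmet_eq gmet_Qf Lp_f1 Lp_f2 Lp_n Lp_f11 Lp_f22 L11 L12 L1n L21 L22 L2n Ln1 Ln2 Lm_zero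
  by (simp add: Qf_def power2_eq_square algebra_simps;
     (use trig1[of "u+v"] cs1 in algebra)?)

lemma d12n: "dgmet lam mu mu PP F1 F2 NN = - (mu^2 * c * s) + lam^2 * c * s^3 + mu^2 * c^3 * s"
  unfolding dgmet_eq gmet_Qf Lp_f1 Lp_f2 Lp_n Lp_f11 Lp_f22 L11 L12 L1n L21 L22 L2n Ln1 Ln2 Lm_zero
  by (simp add: Qf_def power2_eq_square algebra_simps;
     (use trig1[of "u+v"] cs1 in algebra)?)

lemma d21n: "dgmet lam mu mu PP F2 F1 NN = mu^2 * c * s + lam^2 * c^3 * s + mu^2 * c * s^3"
  unfolding dgmet_eq gmet_Qf Lp_f1 Lp_f2 Lp_n Lp_f11 Lp_f22 L11 L12 L1n L21 L22 L2n Ln1 Ln2 Lm_zero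
  by (simp add: Qf_def power2_eq_square algebra_simps;
     (use trig1[of "u+v"] cs1 in algebra)?)

lemma dn12: "dgmet lam mu mu PP NN F1 F2 = - ((lam^2 + mu^2) * (c^3 * s + c * s^3))"
  unfolding dgmet_eq gmet_Qf Lp_f1 Lp_f2 Lp_n Lp_f11 Lp_f22 L11 L12 L1n L21 L22 L2n Ln1 Ln2 Lm_zero
  by (simp add: Qf_def power2_eq_square algebra_simps;
     (use trig1[of "u+v"] cs1 in algebra)?)


abbreviation "GG \<equiv> gmet lam mu mu PP"
abbreviation "DD \<equiv> GG F1 F1 * GG F2 F2 - (GG F1 F2)\<^sup>2"
abbreviation SS where "SS Z \<equiv> ((GG F2 F2 / DD) * cov_ip lam mu mu PP F11 F1 F1 Z
                   - 2 * (GG F1 F2 / DD) * cov_ip lam mu mu PP (0,0) F1 F2 Z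
                   + (GG F1 F1 / DD) * cov_ip lam mu mu PP F22 F2 F2 Z) / 2"
abbreviation "NS \<equiv> {Z \<in> tangent_Sigma3 PP. GG Z F1 = 0 \<and> GG Z F2 = 0}"

lemma cov11: "cov_ip lam mu mu PP F11 F1 F1 NN = mu^2 * c * s - 2 * (lam^2 + mu^2) * c^3 * s"
  by (simp add: cov_ip_def g11n d11n dn11)
lemma cov22: "cov_ip lam mu mu PP F22 F2 F2 NN = - (mu^2 * c * s) - 2 * (lam^2 + mu^2) * c * s^3"
  by (simp add: cov_ip_def g22n d22n dn22)
lemma cov12: "cov_ip lam mu mu PP (0,0) F1 F2 NN = (lam^2 + mu^2) * c * s * (c^2 + s^2)"
  unfolding cov_ip_def g0n d12n d21n dn12 by (simp add: algebra_simps power2_eq_square power3_eq_cube)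

lemma DDv: "DD = lam^2 * mu^2 * c^2 * s^2"
  unfolding g11 g22 g12 using cs1 by algebra

lemma SS_scale: "SS (r *\<^sub>R NN) = r * SS NN"
  unfolding cov_scale by (simp add: algebra_simps)

lemma SS_NN: "SS NN = - (c^2 + s^2) / (2 * c * s)"
proof -
  have nz: "lam^2 * mu^2 * c^2 * s^2 \<noteq> 0" using cpos spos lpos mpos by simp
  have num: "(lam^2 * s^4 + mu^2 * c^2 * s^2) * (mu^2 * c * s - 2 * (lam^2 + mu^2) * c^3 * s)
     - 2 * (- ((lam^2 + mu^2) * c^2 * s^2)) * ((lam^2 + mu^2) * c * s * (c^2 + s^2))
     + (lam^2 * c^4 + mu^2 * c^2 * s^2) * (- (mu^2 * c * s) - 2 * (lam^2 + mu^2) * c * s^3)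
     = - (lam^2 * mu^2) * (c * s * (c^2 + s^2))"
    using cs1 by algebra
  have gen: "\<And>D g11 g12 g22 A B C :: real. D \<noteq> 0 \<Longrightarrow>
      ((g22/D)*A - 2*(g12/D)*B + (g11/D)*C)/2 = (g22*A - 2*g12*B + g11*C)/(2*D)"
    by (simp add: field_simps)
  have "SS NN = - (lam^2 * mu^2) * (c * s * (c^2 + s^2)) / (2 * (lam^2 * mu^2 * c^2 * s^2))"
    unfolding DDv unfolding gen[OF nz] unfolding cov11 cov22 cov12 g11 g22 g12 num by simp
  also have "\<dots> = - (c^2 + s^2) / (2 * c * s)"
    using cpos spos lpos mpos by (simp add: field_simps power2_eq_square)
  finally show ?thesis .
qed


lemma PP_sigma: "(cmod (fst PP))\<^sup>2 - (cmod (snd PP))\<^sup>2 = 1"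
  using cs1 by (simp add: norm_mult)

lemma orth:
  assumes t: "Z \<in> tangent_Sigma3 PP" and h1: "GG Z F1 = 0" and h2: "GG Z F2 = 0" and hn: "GG Z NN = 0"
  shows "Z = 0"
proof -
  define x where "x = Lm PP Z"
  define a1 where "a1 = Im (fst x)"
  define r2 where "r2 = Re (snd x)"
  define i2 where "i2 = Im (snd x)"
  define e1 where "e1 = cos (u + v)"
  define e2 where "e2 = sin (u + v)"
  have r1: "Re (fst x) = 0" using t unfolding tangent_Lm x_def .
  have q1: "lam^2 * c^2 * a1 + mu^2 * (c * s) * (e2 * r2 - e1 * i2) = 0"
    using h1 unfolding gmet_Qf Lp_f1 x_def[symmetric]
    by (simp add: Qf_def a1_def r2_def i2_def e1_def e2_def algebra_simps power2_eq_square)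
  have q2: "- (lam^2 * s^2 * a1) - mu^2 * (c * s) * (e2 * r2 - e1 * i2) = 0"
    using h2 unfolding gmet_Qf Lp_f2 x_def[symmetric]
    by (simp add: Qf_def a1_def r2_def i2_def e1_def e2_def algebra_simps power2_eq_square)
  have qn0: "mu^2 * (c^2 - s^2) * (e1 * r2 + e2 * i2) = 0"
    using hn unfolding gmet_Qf Lp_n x_def[symmetric]
    by (simp add: Qf_def a1_def r2_def i2_def e1_def e2_def algebra_simps power2_eq_square)
  have qn: "mu^2 * (e1 * r2 + e2 * i2) = 0" using qn0 cs1 by simp
  have "lam^2 * (c^2 - s^2) * a1 = 0" using q1 q2 by (simp add: algebra_simps)
  then have a0: "a1 = 0" using cs1 lpos by simp
  then have "mu^2 * (c * s) * (e2 * r2 - e1 * i2) = 0" using q1 by simp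
  then have w0: "e2 * r2 - e1 * i2 = 0" using mpos cpos spos by simp
  have w1: "e1 * r2 + e2 * i2 = 0" using qn mpos by simp
  have ee: "e1 * e1 + e2 * e2 = 1" unfolding e1_def e2_def by (rule trig1)
  have "r2 = e1 * (e1 * r2 + e2 * i2) + e2 * (e2 * r2 - e1 * i2)" using ee by algebra
  then have r0: "r2 = 0" using w0 w1 by simp
  have "i2 = e2 * (e1 * r2 + e2 * i2) - e1 * (e2 * r2 - e1 * i2)" using ee by algebra
  then have i0: "i2 = 0" using w0 w1 by simp
  have "x = 0" using r1 a0 r0 i0 unfolding a1_def r2_def i2_def
    by (simp add: prod_eq_iff complex_eq_iff)
  have "Z = smul PP (Lm PP Z)" by (rule sym[OF Lm_inv[OF PP_sigma]])
  also have "\<dots> = smul PP 0" using \<open>x = 0\<close> unfolding x_def by simp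
  also have "\<dots> = 0" by (simp add: smul_def zero_prod_def)
  finally show ?thesis .
qed

lemma NN_tan: "r *\<^sub>R NN \<in> tangent_Sigma3 PP"
  unfolding tangent_Lm Lm_scale2 Lp_n by simp

lemma NN_in: "r *\<^sub>R NN \<in> NS"
  using NN_tan by (simp add: gmet_scale1 gn1 gn2 del: scaleR_Pair)

lemma span:
  assumes "Z \<in> NS"
  shows "Z = (GG Z NN / mu^2) *\<^sub>R NN"
proof -
  define r where "r = GG Z NN / mu^2"
  define D where "D = Z - r *\<^sub>R NN"
  have "D \<in> tangent_Sigma3 PP"
    using assms unfolding D_def tangent_Lm Lm_diff2 Lm_scale2 Lp_n by simp
  moreover have "GG D F1 = 0" "GG D F2 = 0"
    using assms unfolding D_def gmet_diff1 gmet_scale1 gn1 gn2 by simp_all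
  moreover have "GG D NN = 0"
    using mpos unfolding D_def gmet_diff1 gmet_scale1 gnn r_def by simp
  ultimately have "D = 0" by (rule orth)
  then show ?thesis unfolding D_def r_def by simp
qed


lemma NN_in1: "NN \<in> NS"
  using NN_in[of 1] by simp

lemma the_H: "(THE H. H \<in> NS \<and> (\<forall>Z\<in>NS. GG H Z = SS Z)) = (SS NN / mu^2) *\<^sub>R NN"
proof (rule the_equality)
  show "(SS NN / mu^2) *\<^sub>R NN \<in> NS \<and> (\<forall>Z\<in>NS. GG ((SS NN / mu^2) *\<^sub>R NN) Z = SS Z)"
  proof
    show "(SS NN / mu^2) *\<^sub>R NN \<in> NS" by (rule NN_in)
    show "\<forall>Z\<in>NS. GG ((SS NN / mu^2) *\<^sub>R NN) Z = SS Z"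
    proof
      fix Z assume Z: "Z \<in> NS"
      define r where "r = GG Z NN / mu^2"
      have Zr: "Z = r *\<^sub>R NN" using span[OF Z] unfolding r_def .
      have "GG ((SS NN / mu^2) *\<^sub>R NN) (r *\<^sub>R NN) = SS (r *\<^sub>R NN)"
        unfolding gmet_scale1 gmet_scale2 gnn SS_scale using mpos by simp
      then show "GG ((SS NN / mu^2) *\<^sub>R NN) Z = SS Z" using Zr by simp
    qed
  qed
next
  fix H assume H: "H \<in> NS \<and> (\<forall>Z\<in>NS. GG H Z = SS Z)"
  define r where "r = GG H NN / mu^2"
  have Hr: "H = r *\<^sub>R NN" using span H unfolding r_def by blast
  have "GG H NN = SS NN" using H NN_in1 by blast
  then have "r * mu^2 = SS NN" using Hr gmet_scale1 gnn by metis
  then have "r = SS NN / mu^2" using mpos by (simp add: field_simps)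
  then show "H = (SS NN / mu^2) *\<^sub>R NN" using Hr by simp
qed

lemma norm_H: "sqrt (GG ((SS NN / mu^2) *\<^sub>R NN) ((SS NN / mu^2) *\<^sub>R NN)) = (c^2 + s^2) / (2 * c * s * mu)"
proof -
  have "GG ((SS NN / mu^2) *\<^sub>R NN) ((SS NN / mu^2) *\<^sub>R NN) = ((c^2 + s^2) / (2 * c * s * mu))^2"
    unfolding gmet_scale1 gmet_scale2 gnn SS_NN using mpos cpos spos
    by (simp add: field_simps power2_eq_square)
  then show ?thesis using mpos cpos spos by simp
qed

end

lemma pd_pts:
  "pd1 (torusU th) (u, v) = (complex_of_real (cosh th) * (\<i> * cis u), 0)"
  "pd2 (torusU th) (u, v) = (0, complex_of_real (sinh th) * (\<i> * cis v))"
  "torusU th (u, v) = (complex_of_real (cosh th) * cis u, complex_of_real (sinh th) * cis v)"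
  by (simp_all add: pd1_torus pd2_torus torusU_def)

lemma norm_torus:
  assumes "th > 0" "lam > 0" "mu > 0"
  shows "mean_curv_norm lam mu mu (torusU th) (u, v) = (cosh th ^ 2 + sinh th ^ 2) / (2 * cosh th * sinh th * mu)"
proof -
  have cs: "cosh th ^ 2 - sinh th ^ 2 = 1" by (rule hyperbolic_pythagoras)
  have cp: "cosh th > 0" by simp
  have sp: "sinh th > 0" using assms by simp
  have "mean_curv_vec lam mu mu (torusU th) (u, v) =
     (SS (cosh th) (sinh th) u v lam mu (NN (cosh th) (sinh th) u v) / mu^2) *\<^sub>R NN (cosh th) (sinh th) u v"
    unfolding mean_curv_vec_def Let_def pd11_torus pd12_torus pd22_torus fst_conv snd_conv
    unfolding pd_pts
    by (rule the_H[OF cs cp sp assms(2,3)])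
  then show ?thesis
    unfolding mean_curv_norm_def pd_pts
    using norm_H[OF cs cp sp assms(2,3)] by simp
qed



lemma final_alg:
  fixes mu C :: real
  assumes mpos: "mu > 0" and C: "C > 1 / mu"
  shows "\<exists>th>0. (cosh th ^ 2 + sinh th ^ 2) / (2 * cosh th * sinh th * mu) = C"
proof -
  define k where "k = mu * C"
  have k1: "k > 1" using C mpos unfolding k_def by (simp add: field_simps)
  define Y where "Y = (k + 1) / (k - 1)"
  have Y1: "Y > 1" using k1 unfolding Y_def by (simp add: field_simps)
  define th where "th = ln Y / 4"
  have thp: "th > 0" using Y1 unfolding th_def by simp
  define y where "y = exp th"
  have yp: "y > 0" unfolding y_def by simp
  have y4: "y ^ 4 = Y"
  proof -
    have "y ^ 4 = exp (of_nat 4 * th)" unfolding y_def by (rule exp_of_nat_mult[symmetric])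
    also have "of_nat 4 * th = ln Y" unfolding th_def by simp
    finally show ?thesis using Y1 by simp
  qed
  have ch: "cosh th = (y + inverse y) / 2" unfolding cosh_field_def y_def exp_minus ..
  have sh: "sinh th = (y - inverse y) / 2" unfolding sinh_field_def y_def exp_minus ..
  have "(cosh th ^ 2 + sinh th ^ 2) / (2 * cosh th * sinh th * mu) = (y^4 + 1) / (mu * (y^4 - 1))"
  proof -
    have y1: "y > 1" unfolding y_def using thp by simp
    have y41: "y^4 - 1 > 0" using one_less_power[OF y1, of 4] by simp
    have a: "((y + inverse y) / 2)^2 + ((y - inverse y) / 2)^2 = (y^4 + 1) / (2 * y^2)"
      using yp by (simp add: field_simps power2_eq_square eval_nat_numeral)
    have b: "2 * ((y + inverse y) / 2) * ((y - inverse y) / 2) * mu = mu * (y^4 - 1) / (2 * y^2)"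
      using yp by (simp add: field_simps power2_eq_square eval_nat_numeral)
    have gen: "\<And>A B D :: real. D \<noteq> 0 \<Longrightarrow> B \<noteq> 0 \<Longrightarrow> (A / D) / (B / D) = A / B"
      by (simp add: field_simps)
    show ?thesis unfolding ch sh a b using yp mpos y41 by (intro gen) auto
  qed
  also have "\<dots> = C" unfolding y4 Y_def using k1 mpos unfolding k_def
    by (simp add: field_simps)
  finally show ?thesis using thp by blast
qed

theorem mainTheorem7:
  fixes lam mu nu C :: real
  assumes "lam > 0" and "mu > 0" and "nu = mu" and "C > 1 / mu"
  shows "\<exists>\<theta>>0. \<forall>\<alpha> \<beta>. mean_curv_norm lam mu nu (torusU \<theta>) (\<alpha>, \<beta>) = C"
proof -
  obtain th where th: "th > 0" "(cosh th ^ 2 + sinh th ^ 2) / (2 * cosh th * sinh th * mu) = C"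
    using final_alg[OF assms(2,4)] by blast
  show ?thesis
    using th norm_torus[OF th(1) assms(1,2)] assms(3) by auto
qed

end
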